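(* Let $\phi$ be a good potential on $\mathcal D$ with $\phi>0$, total potential $\Phi$. Let $\boldsymbol x\in\mathcal D^N$, $t>0$, $\boldsymbol p\in\Delta^{N-1}$ with $p_i\propto\partial_x\phi(x_i,t)$ (arbitrary if all these vanish), $\boldsymbol\ell\in\mathbb{R}^N$, $\Delta x_i=\langle\boldsymbol p,\boldsymbol\ell\rangle-\ell_i$, $\Delta t\ge0$, $(\boldsymbol x',t')=(\boldsymbol x+\Delta\boldsymbol x,t+\Delta t)$ and $\boldsymbol\Delta=(\Delta\boldsymbol x,\Delta t)\in\mathbb{R}^{N+1}$. Then there is a point $(\bar{\boldsymbol x},\bar t)$ on the line segment between $(\boldsymbol x,t)$ and $(\boldsymbol x',t')$ such that $$\log\Phi(\boldsymbol x',t')-\log\Phi(\boldsymbol x,t)=-\frac{\sum_{i=1}^N\partial_{xx}\phi(x_i,t)\,\Delta t}{2\,\Phi(\boldsymbol x,t)}+\frac12\nabla^2\log\Phi(\bar{\boldsymbol x},\bar t)[\boldsymbol\Delta,\boldsymbol\Delta].$$ In particular, if $\log\Phi(\boldsymbol x',t')=\log\Phi(\boldsymbol x,t)$, then $$\Delta t=\frac{\Phi(\boldsymbol x,t)\,\nabla^2\log\Phi(\bar{\boldsymbol x},\bar t)[\boldsymbol\Delta,\boldsymbol\Delta]}{\sum_{i=1}^N\partial_{xx}\phi(x_i,t)}.$$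
   Context: Good potential: let $\mathcal D=\mathbb{R}$ or $\mathcal D=[y_0,\infty)$, with Euclidean projection $\Pi_{\mathcal D}$. A function $\phi:\mathbb{R}\times[0,\infty)\to\mathbb{R}$ is a good potential on $\mathcal D$ if (1) it is jointly strictly convex, (2) three times differentiable, (3) $\partial_y\phi\ge0$, (4) $\partial_t\phi\le0$, (5) $\lim_{t\to\infty}\phi(y,t)=\inf_{y,t}\phi(y,t)\ge0$, (6) $\phi(\Pi_{\mathcal D}(y),t)\le\phi(y,t)$ for all $y$, and (7) $\partial_t\phi=-\tfrac12\partial_{yy}\phi$. Total potential $\Phi(\boldsymbol x,t)=\sum_{i=1}^N\phi(x_i,t)$. For a twice differentiable $f$, $\nabla^2 f(\boldsymbol z)[\boldsymbol a,\boldsymbol b]=\boldsymbol a^{\mathsf T}\nabla^2 f(\boldsymbol z)\boldsymbol b$. *)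

theory Defs
  imports "HOL-Analysis.Analysis"
begin

definition pdom :: "(real \<times> real) set" where
  "pdom = UNIV \<times> {0..}"

definition strictly_convex_on :: "'a::real_vector set \<Rightarrow> ('a \<Rightarrow> real) \<Rightarrow> bool" where
  "strictly_convex_on S f \<longleftrightarrow>
     (\<forall>x\<in>S. \<forall>y\<in>S. \<forall>u::real. x \<noteq> y \<and> 0 < u \<and> u < 1 \<longrightarrow>
        f (u *\<^sub>R x + (1 - u) *\<^sub>R y) < u * f x + (1 - u) * f y)"

definition D1 :: "'a::real_normed_vector set \<Rightarrow> ('a \<Rightarrow> real) \<Rightarrow> 'a \<Rightarrow> 'a \<Rightarrow> real" where
  "D1 S f z a = frechet_derivative f (at z within S) a"

definition D2 :: "'a::real_normed_vector set \<Rightarrow> ('a \<Rightarrow> real) \<Rightarrow> 'a \<Rightarrow> 'a \<Rightarrow> 'a \<Rightarrow> real" where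
  "D2 S f z a b = frechet_derivative (\<lambda>w. D1 S f w a) (at z within S) b"

definition thrice_differentiable_on :: "'a::real_normed_vector set \<Rightarrow> ('a \<Rightarrow> real) \<Rightarrow> bool" where
  "thrice_differentiable_on S f \<longleftrightarrow>
     (\<forall>z\<in>S. f differentiable (at z within S)) \<and>
     (\<forall>a. \<forall>z\<in>S. (\<lambda>w. D1 S f w a) differentiable (at z within S)) \<and>
     (\<forall>a b. \<forall>z\<in>S. (\<lambda>w. D2 S f w a b) differentiable (at z within S))"

definition dy :: "(real \<times> real \<Rightarrow> real) \<Rightarrow> real \<Rightarrow> real \<Rightarrow> real" where
  "dy phi y t = D1 pdom phi (y, t) (1, 0)"

definition dt :: "(real \<times> real \<Rightarrow> real) \<Rightarrow> real \<Rightarrow> real \<Rightarrow> real" where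
  "dt phi y t = D1 pdom phi (y, t) (0, 1)"

definition dyy :: "(real \<times> real \<Rightarrow> real) \<Rightarrow> real \<Rightarrow> real \<Rightarrow> real" where
  "dyy phi y t = D2 pdom phi (y, t) (1, 0) (1, 0)"

definition admissible_dom :: "real set \<Rightarrow> bool" where
  "admissible_dom D \<longleftrightarrow> D = UNIV \<or> (\<exists>y0. D = {y0..})"

definition good_potential :: "real set \<Rightarrow> (real \<times> real \<Rightarrow> real) \<Rightarrow> bool" where
  "good_potential D phi \<longleftrightarrow>
     admissible_dom D \<and>
     strictly_convex_on pdom phi \<and>
     thrice_differentiable_on pdom phi \<and>
     (\<forall>y. \<forall>t\<ge>0. dy phi y t \<ge> 0) \<and>
     (\<forall>y. \<forall>t\<ge>0. dt phi y t \<le> 0) \<and>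
     (\<forall>y. ((\<lambda>t. phi (y, t)) \<longlongrightarrow> Inf (phi ` pdom)) at_top) \<and>
     Inf (phi ` pdom) \<ge> 0 \<and>
     (\<forall>y. \<forall>t\<ge>0. phi (closest_point D y, t) \<le> phi (y, t)) \<and>
     (\<forall>y. \<forall>t\<ge>0. dt phi y t = - (1/2) * dyy phi y t)"

definition total_pot :: "(real \<times> real \<Rightarrow> real) \<Rightarrow> (real^'n) \<times> real \<Rightarrow> real" where
  "total_pot phi z = (\<Sum>i\<in>UNIV. phi (fst z $ i, snd z))"

definition hess :: "('a::real_normed_vector \<Rightarrow> real) \<Rightarrow> 'a \<Rightarrow> 'a \<Rightarrow> 'a \<Rightarrow> real" where
  "hess f z a b = frechet_derivative (\<lambda>w. frechet_derivative f (at w) a) (at z) b"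

end

theory Submission imports Defs begin

lemma at_pdom: assumes "snd z > 0" shows "at z within pdom = at z"
proof -
  have "open {z::real\<times>real. snd z > 0}" by (intro open_Collect_less continuous_intros)
  moreover have "{z::real\<times>real. snd z > 0} \<subseteq> pdom" by (auto simp: pdom_def)
  ultimately have "z \<in> interior pdom" using assms interior_maximal by blast
  thus ?thesis by (rule at_within_interior)
qed

lemma open_pos: "open {z::'a::topological_space \<times> real. snd z > 0}"
  by (intro open_Collect_less continuous_intros)

lemma phi_der:
  assumes td: "thrice_differentiable_on pdom phi" and z: "snd z > 0"
  shows "(phi has_derivative frechet_derivative phi (at z)) (at z)"
    "D1 pdom phi z = frechet_derivative phi (at z)"
proof -
  have "z \<in> pdom" using z by (cases z) (auto simp: pdom_def)
  then have "phi differentiable (at z)" using td at_pdom[OF z]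
    unfolding thrice_differentiable_on_def by metis
  then show "(phi has_derivative frechet_derivative phi (at z)) (at z)"
    using frechet_derivative_works by blast
  show "D1 pdom phi z = frechet_derivative phi (at z)"
    unfolding D1_def at_pdom[OF z] by (rule ext) simp
qed

lemma phi_d2:
  assumes td: "thrice_differentiable_on pdom phi" and z: "snd z > 0"
  shows "(\<lambda>w. frechet_derivative phi (at w) a) differentiable (at z)"
proof -
  have "z \<in> pdom" using z by (cases z) (auto simp: pdom_def)
  then have "(\<lambda>w. D1 pdom phi w a) differentiable (at z)" using td at_pdom[OF z]
    unfolding thrice_differentiable_on_def by metis
  then obtain D' where D': "((\<lambda>w. D1 pdom phi w a) has_derivative D') (at z)"
    unfolding differentiable_def by blast
  have "((\<lambda>w. frechet_derivative phi (at w) a) has_derivative D') (at z)"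
    by (rule has_derivative_transform_within_open[OF D' open_pos])
       (use z phi_der(2)[OF td] in auto)
  then show ?thesis unfolding differentiable_def by blast
qed

lemma proj_der: "((\<lambda>w::(real^'n)\<times>real. (fst w $ i, snd w)) has_derivative (\<lambda>h. (fst h $ i, snd h))) F"
proof -
  have "bounded_linear (\<lambda>h::(real^'n)\<times>real. (fst h $ i, snd h))"
    by (intro bounded_linear_Pair bounded_linear_compose[OF bounded_linear_vec_nth] bounded_linear_fst bounded_linear_snd)
  then show ?thesis by (rule bounded_linear_imp_has_derivative)
qed

lemma Phi_pos:
  assumes pos: "\<forall>z\<in>pdom. phi z > 0" and w: "snd w \<ge> 0"
  shows "total_pot phi (w :: (real^'n)\<times>real) > 0"
  unfolding total_pot_def
  by (rule sum_pos) (use pos w in \<open>auto simp: pdom_def\<close>)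

lemma Phi_der:
  assumes td: "thrice_differentiable_on pdom phi" and w: "snd w > 0"
  shows "(total_pot phi has_derivative
     (\<lambda>h. \<Sum>i\<in>UNIV. frechet_derivative phi (at (fst w $ i, snd w)) (fst h $ i, snd h))) (at (w :: (real^'n)\<times>real))"
  unfolding total_pot_def
  apply (rule has_derivative_sum)
  apply (rule has_derivative_compose[OF proj_der, where g=phi])
  apply (rule phi_der(1)[OF td]) using w by simp

definition GG :: "(real \<times> real \<Rightarrow> real) \<Rightarrow> (real^'n)\<times>real \<Rightarrow> (real^'n)\<times>real \<Rightarrow> real" where
  "GG phi a w = (\<Sum>i\<in>UNIV. frechet_derivative phi (at (fst w $ i, snd w)) (fst a $ i, snd a)) * inverse (total_pot phi w)"

lemma F_der:
  assumes td: "thrice_differentiable_on pdom phi" and pos: "\<forall>z\<in>pdom. phi z > 0" and w: "snd w > 0"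
  shows "((\<lambda>z. ln (total_pot phi z)) has_derivative (\<lambda>a. GG phi a w)) (at (w :: (real^'n)\<times>real))"
  unfolding GG_def
  by (rule has_derivative_ln[OF Phi_pos[OF pos] Phi_der[OF td w]]) (use w in simp)

lemma F_fd:
  assumes td: "thrice_differentiable_on pdom phi" and pos: "\<forall>z\<in>pdom. phi z > 0" and w: "snd w > 0"
  shows "frechet_derivative (\<lambda>z. ln (total_pot phi z)) (at (w :: (real^'n)\<times>real)) a = GG phi a w"
  using frechet_derivative_at[OF F_der[OF td pos w]] by metis

lemma GG_diff:
  assumes td: "thrice_differentiable_on pdom phi" and pos: "\<forall>z\<in>pdom. phi z > 0" and w: "snd w > 0"
  shows "(GG phi a) differentiable (at (w :: (real^'n)\<times>real))"
  unfolding GG_def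
proof (intro differentiable_mult differentiable_inverse differentiable_sum ballI)
  fix i
  show "(\<lambda>x. frechet_derivative phi (at (fst x $ i, snd x)) (fst a $ i, snd a)) differentiable at w"
    by (rule differentiable_compose[where g="\<lambda>w. (fst w $ i, snd w)" and f="\<lambda>z. frechet_derivative phi (at z) (fst a $ i, snd a)"])
      (use phi_d2[OF td] w proj_der[of i "at w"] in \<open>auto simp: differentiable_def\<close>)
  show "total_pot phi differentiable at w" using Phi_der[OF td w] by (auto simp: differentiable_def)
  show "total_pot phi w \<noteq> 0" using Phi_pos[OF pos, of w] w by simp
qed simp

lemma F2_der:
  assumes td: "thrice_differentiable_on pdom phi" and pos: "\<forall>z\<in>pdom. phi z > 0" and w: "snd w > 0"
  shows "((\<lambda>z. frechet_derivative (\<lambda>z. ln (total_pot phi z)) (at z) a) has_derivative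
           hess (\<lambda>z. ln (total_pot phi z)) (w :: (real^'n)\<times>real) a) (at w)"
proof -
  obtain D' where D': "(GG phi a has_derivative D') (at w)"
    using GG_diff[OF td pos w] unfolding differentiable_def by blast
  have "((\<lambda>z. frechet_derivative (\<lambda>z. ln (total_pot phi z)) (at z) a) has_derivative D') (at w)"
    by (rule has_derivative_transform_within_open[OF D' open_pos])
       (use w in \<open>auto simp: F_fd[OF td pos]\<close>)
  then show ?thesis unfolding hess_def
    using frechet_derivative_at by metis
qed

theorem lemma6p3:
  fixes D :: "real set" and phi :: "real \<times> real \<Rightarrow> real"
    and x p l dx :: "real^'n" and t dT :: real
  assumes gp: "good_potential D phi"
    and pos: "\<forall>z\<in>pdom. phi z > 0"
    and xD: "\<forall>i. x $ i \<in> D"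
    and tpos: "t > 0"
    and p_nonneg: "\<forall>i. p $ i \<ge> 0"
    and p_sum: "(\<Sum>i\<in>UNIV. p $ i) = 1"
    and p_prop: "(\<Sum>j\<in>UNIV. dy phi (x $ j) t) \<noteq> 0 \<longrightarrow>
                 (\<forall>i. p $ i = dy phi (x $ i) t / (\<Sum>j\<in>UNIV. dy phi (x $ j) t))"
    and dx_def: "\<forall>i. dx $ i = p \<bullet> l - l $ i"
    and dT_nonneg: "dT \<ge> 0"
  shows "\<exists>zb \<in> closed_segment (x, t) (x + dx, t + dT).
     ln (total_pot phi (x + dx, t + dT)) - ln (total_pot phi (x, t)) =
       - (\<Sum>i\<in>UNIV. dyy phi (x $ i) t) * dT / (2 * total_pot phi (x, t))
       + (1/2) * hess (\<lambda>z. ln (total_pot phi z)) zb (dx, dT) (dx, dT)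
     \<and> (ln (total_pot phi (x + dx, t + dT)) = ln (total_pot phi (x, t)) \<and>
        (\<Sum>i\<in>UNIV. dyy phi (x $ i) t) \<noteq> 0 \<longrightarrow>
        dT = total_pot phi (x, t) * hess (\<lambda>z. ln (total_pot phi z)) zb (dx, dT) (dx, dT)
             / (\<Sum>i\<in>UNIV. dyy phi (x $ i) t))"
proof -
  have td: "thrice_differentiable_on pdom phi" using gp unfolding good_potential_def by blast
  have dyn: "\<And>y s. s \<ge> 0 \<Longrightarrow> dy phi y s \<ge> 0" using gp unfolding good_potential_def by blast
  have dte: "\<And>y s. s \<ge> 0 \<Longrightarrow> dt phi y s = - (1/2) * dyy phi y s" using gp unfolding good_potential_def by blast
  define F where "F = (\<lambda>z::(real^'n)\<times>real. ln (total_pot phi z))"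
  define \<Delta> where "\<Delta> = (dx, dT)"
  define z where "z s = (x,t) + s *\<^sub>R \<Delta>" for s
  have zsnd: "snd (z s) > 0" if "s \<ge> 0" for s
    using that tpos dT_nonneg by (simp add: z_def \<Delta>_def add_pos_nonneg)
  have z_der: "(z has_derivative (\<lambda>h. h *\<^sub>R \<Delta>)) (at s)" for s
    unfolding z_def by (auto intro!: derivative_eq_intros)
  define g0 where "g0 s = F (z s)" for s
  define g1 where "g1 s = frechet_derivative F (at (z s)) \<Delta>" for s
  define g2 where "g2 s = hess F (z s) \<Delta> \<Delta>" for s
  have d1: "DERIV g0 s :> g1 s" if "s \<ge> 0" for s
  proof -
    have Fd: "(F has_derivative (\<lambda>a. GG phi a (z s))) (at (z s))"
      unfolding F_def by (rule F_der[OF td pos zsnd[OF that]])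
    have bl: "bounded_linear (\<lambda>a. GG phi a (z s))" using has_derivative_bounded_linear[OF Fd] .
    have "(g0 has_derivative (\<lambda>h. GG phi (h *\<^sub>R \<Delta>) (z s))) (at s)"
      unfolding g0_def by (rule has_derivative_compose[OF z_der Fd])
    moreover have "(\<lambda>h. GG phi (h *\<^sub>R \<Delta>) (z s)) = (\<lambda>h. g1 s * h)"
      unfolding g1_def F_def F_fd[OF td pos zsnd[OF that]]
      using linear_simps(5)[OF bl] by auto
    ultimately show ?thesis unfolding has_field_derivative_def by simp
  qed
  have d2: "DERIV g1 s :> g2 s" if "s \<ge> 0" for s
  proof -
    have Fd: "((\<lambda>w. frechet_derivative F (at w) \<Delta>) has_derivative hess F (z s) \<Delta>) (at (z s))"
      unfolding F_def by (rule F2_der[OF td pos zsnd[OF that]])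
    have bl: "bounded_linear (hess F (z s) \<Delta>)" using has_derivative_bounded_linear[OF Fd] .
    have "(g1 has_derivative (\<lambda>h. hess F (z s) \<Delta> (h *\<^sub>R \<Delta>))) (at s)"
      unfolding g1_def by (rule has_derivative_compose[OF z_der Fd])
    moreover have "(\<lambda>h. hess F (z s) \<Delta> (h *\<^sub>R \<Delta>)) = (\<lambda>h. g2 s * h)"
      unfolding g2_def using linear_simps(5)[OF bl] by auto
    ultimately show ?thesis unfolding has_field_derivative_def by simp
  qed
  define diff where "diff m = (if m = 0 then g0 else if m = 1 then g1 else g2)" for m :: nat
  have "\<exists>\<xi>::real. 0 < \<xi> \<and> \<xi> < 1 \<and>
      g0 1 = (\<Sum>m<2. (diff m 0 / fact m) * 1 ^ m) + (diff 2 \<xi> / fact 2) * 1 ^ 2"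
    by (rule Maclaurin) (use d1 d2 in \<open>auto simp: diff_def less_2_cases_iff\<close>)
  then obtain \<xi> :: real where xi: "0 < \<xi>" "\<xi> < 1" and tay: "g0 1 = g0 0 + g1 0 + g2 \<xi> / 2"
    by (auto simp: diff_def numeral_2_eq_2)
  have z0: "z 0 = (x,t)" and z1: "z 1 = (x + dx, t + dT)" by (simp_all add: z_def \<Delta>_def)
  define P0 where "P0 = total_pot phi (x,t)"
  have P0pos: "P0 > 0" unfolding P0_def by (rule Phi_pos[OF pos]) (use tpos in simp)
  have comp: "frechet_derivative phi (at (x$i,t)) (dx$i, dT) = dx$i * dy phi (x$i) t + dT * dt phi (x$i) t" for i
  proof -
    have snd0: "snd (x$i,t) > 0" using tpos by simp
    have bl: "bounded_linear (frechet_derivative phi (at (x$i,t)))"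
      using has_derivative_bounded_linear[OF phi_der(1)[OF td snd0]] .
    have e: "(dx$i, dT) = dx$i *\<^sub>R (1,0) + dT *\<^sub>R (0,1)" by simp
    show ?thesis unfolding dy_def dt_def phi_der(2)[OF td snd0]
      by (subst e) (simp only: linear_simps(1,5)[OF bl] real_scaleR_def)
  qed
  define S where "S = (\<Sum>j\<in>UNIV. dy phi (x $ j) t)"
  have sum0: "(\<Sum>i\<in>UNIV. dx$i * dy phi (x$i) t) = 0"
  proof (cases "S = 0")
    case True
    have "\<forall>i\<in>UNIV. dy phi (x$i) t = 0"
      using True unfolding S_def by (subst sum_nonneg_eq_0_iff[symmetric]) (use dyn tpos in auto)
    then show ?thesis by simp
  next
    case False
    have pl: "p \<bullet> l = (\<Sum>i\<in>UNIV. dy phi (x$i) t * l$i) / S"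
      using p_prop False unfolding S_def inner_vec_def
      by (simp add: sum_divide_distrib)
    have "(\<Sum>i\<in>UNIV. dx$i * dy phi (x$i) t) = S * (p \<bullet> l) - (\<Sum>i\<in>UNIV. dy phi (x$i) t * l$i)"
      unfolding dx_def[rule_format] S_def
      by (simp add: algebra_simps sum_subtractf sum_distrib_left sum_distrib_right)
    then show ?thesis using False pl by simp
  qed
  have key: "(\<Sum>i\<in>UNIV. frechet_derivative phi (at (x$i,t)) (dx$i, dT)) = - (\<Sum>i\<in>UNIV. dyy phi (x $ i) t) * dT / 2"
    unfolding comp sum.distrib sum0 using dte tpos
    by (simp add: sum_distrib_left sum_distrib_right sum_divide_distrib sum_negf algebra_simps)
  have g10: "g1 0 = - (\<Sum>i\<in>UNIV. dyy phi (x $ i) t) * dT / (2 * P0)"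
  proof -
    have "g1 0 = GG phi \<Delta> (z 0)" unfolding g1_def F_def by (rule F_fd[OF td pos zsnd[OF order_refl]])
    also have "\<dots> = - (\<Sum>i\<in>UNIV. dyy phi (x $ i) t) * dT / 2 * inverse P0"
      unfolding z0 GG_def \<Delta>_def fst_conv snd_conv key P0_def ..
    finally show ?thesis by (simp add: field_simps)
  qed
  have eq: "ln (total_pot phi (x + dx, t + dT)) - ln (total_pot phi (x, t)) =
       - (\<Sum>i\<in>UNIV. dyy phi (x $ i) t) * dT / (2 * total_pot phi (x, t))
       + (1/2) * hess (\<lambda>z. ln (total_pot phi z)) (z \<xi>) (dx, dT) (dx, dT)"
    using tay g10 unfolding g0_def z0 z1 g2_def F_def \<Delta>_def P0_def by simp
  have mem: "z \<xi> \<in> closed_segment (x, t) (x + dx, t + dT)"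
    unfolding closed_segment_def
    by (rule CollectI, rule exI[of _ \<xi>]) (use xi in \<open>auto simp: z_def \<Delta>_def algebra_simps\<close>)
  show ?thesis
  proof (rule bexI[OF _ mem], intro conjI impI)
    show "ln (total_pot phi (x + dx, t + dT)) - ln (total_pot phi (x, t)) =
       - (\<Sum>i\<in>UNIV. dyy phi (x $ i) t) * dT / (2 * total_pot phi (x, t))
       + (1/2) * hess (\<lambda>z. ln (total_pot phi z)) (z \<xi>) (dx, dT) (dx, dT)" by (rule eq)
    assume h: "ln (total_pot phi (x + dx, t + dT)) = ln (total_pot phi (x, t)) \<and>
        (\<Sum>i\<in>UNIV. dyy phi (x $ i) t) \<noteq> 0"
    show "dT = total_pot phi (x, t) * hess (\<lambda>z. ln (total_pot phi z)) (z \<xi>) (dx, dT) (dx, dT)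
             / (\<Sum>i\<in>UNIV. dyy phi (x $ i) t)"
      using eq h P0pos unfolding P0_def by (simp add: field_simps)
  qed
qed
end
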